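(* Let $V$ be a finite-dimensional real vector space with a non-degenerate inner product of signature $(p,q)$, $p,q\ge1$, $p+q\ge3$; let $Q(v)=(v,v)$ and $\mathcal{I}=Q\cdot\mathbb{R}[V,\mathbb{R}]$. Let $W$ be a finite-dimensional real vector space of dimension $w$ and $r\le w$. Let $\Delta$ be an $\mathbb{R}[V,\mathbb{R}]$-submodule of $\mathbb{R}[V,W]$ such that $Q\cdot x\in\Delta$ implies $x\in\Delta$. If there exist $x_1,\dots,x_r\in\Delta$ with $I(x_1,\dots,x_r)\ne\{0\}$, then there exist $x_1,\dots,x_r\in\Delta$ with $k(x_1,\dots,x_r)=0$, i.e. with $I(x_1,\dots,x_r)\not\subset\mathcal{I}$.
   Context: $\mathbb{R}[V,\mathbb{R}]$ is the ring of real polynomial functions on $V$ and $\mathbb{R}[V,W]$ the module of polynomial maps $V\to W$. For $x_1,\dots,x_r\in\mathbb{R}[V,W]$ and a basis of $W$, $I(x_1,\dots,x_r)$ is the ideal generated by all $r\times r$ minors of the $w\times r$ matrix whose $i$-th column is the coordinate vector of $x_i$ (independent of basis). If $I(x_1,\dots,x_r)\neq\{0\}$, $k(x_1,\dots,x_r)$ is the smallest integer $k\ge0$ with $I(x_1,\dots,x_r)\not\subset\mathcal{I}^{k+1}$. *)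

theory Defs
  imports "HOL-Analysis.Analysis" "HOL-Combinatorics.Permutations"
begin

inductive poly_fun :: "('v::real_vector \<Rightarrow> real) \<Rightarrow> bool" where
  const: "poly_fun (\<lambda>v. c)"
| lin: "linear l \<Longrightarrow> poly_fun l"
| add: "poly_fun f \<Longrightarrow> poly_fun g \<Longrightarrow> poly_fun (\<lambda>v. f v + g v)"
| mult: "poly_fun f \<Longrightarrow> poly_fun g \<Longrightarrow> poly_fun (\<lambda>v. f v * g v)"

definition poly_map :: "('v::real_vector \<Rightarrow> 'w::euclidean_space) \<Rightarrow> bool" where
  "poly_map x \<longleftrightarrow> (\<forall>b\<in>Basis. poly_fun (\<lambda>v. x v \<bullet> b))"

definition poly_submodule :: "('v::real_vector \<Rightarrow> 'w::euclidean_space) set \<Rightarrow> bool" where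
  "poly_submodule D \<longleftrightarrow> D \<subseteq> {x. poly_map x} \<and> (\<lambda>v. 0) \<in> D \<and>
     (\<forall>x\<in>D. \<forall>y\<in>D. (\<lambda>v. x v + y v) \<in> D) \<and>
     (\<forall>f x. poly_fun f \<longrightarrow> x \<in> D \<longrightarrow> (\<lambda>v. f v *\<^sub>R x v) \<in> D)"

definition ideal_gen :: "('v::real_vector \<Rightarrow> real) set \<Rightarrow> ('v \<Rightarrow> real) set" where
  "ideal_gen G = {(\<lambda>v. \<Sum>i<n. f i v * g i v) | (n::nat) f g. \<forall>i<n. poly_fun (f i) \<and> g i \<in> G}"

definition det_nat :: "nat \<Rightarrow> (nat \<Rightarrow> nat \<Rightarrow> real) \<Rightarrow> real" where
  "det_nat r M = (\<Sum>p\<in>{p. p permutes {..<r}}. of_int (sign p) * (\<Prod>i<r. M i (p i)))"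

text \<open>All r x r minors of the w x r matrix whose j-th column is the coordinate vector
  of x_j (rows chosen by an injective selection of r basis vectors of W).\<close>
definition minors :: "nat \<Rightarrow> (nat \<Rightarrow> 'v::real_vector \<Rightarrow> 'w::euclidean_space) \<Rightarrow> ('v \<Rightarrow> real) set" where
  "minors r xs = {(\<lambda>v. det_nat r (\<lambda>i j. xs j v \<bullet> \<sigma> i)) | \<sigma>.
                    inj_on \<sigma> {..<r} \<and> \<sigma> ` {..<r} \<subseteq> Basis}"

definition minor_ideal :: "nat \<Rightarrow> (nat \<Rightarrow> 'v::real_vector \<Rightarrow> 'w::euclidean_space) \<Rightarrow> ('v \<Rightarrow> real) set" where
  "minor_ideal r xs = ideal_gen (minors r xs)"

definition has_signature :: "('v::euclidean_space \<Rightarrow> 'v \<Rightarrow> real) \<Rightarrow> nat \<Rightarrow> nat \<Rightarrow> bool" where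
  "has_signature B p q \<longleftrightarrow> bilinear B \<and> (\<forall>u v. B u v = B v u) \<and> p + q = DIM('v) \<and>
     (\<exists>e::nat \<Rightarrow> 'v. inj_on e {..<p+q} \<and> independent (e ` {..<p+q}) \<and>
        span (e ` {..<p+q}) = UNIV \<and>
        (\<forall>i<p+q. \<forall>j<p+q. i \<noteq> j \<longrightarrow> B (e i) (e j) = 0) \<and>
        (\<forall>i<p. B (e i) (e i) = 1) \<and> (\<forall>i. p \<le> i \<and> i < p+q \<longrightarrow> B (e i) (e i) = -1))"

end

theory Submission
  imports Defs "Jordan_Normal_Form.Determinant"
begin

no_notation Matrix.scalar_prod (infix "\<bullet>" 70)


lemma poly_fun_const[simp, intro]: "poly_fun (\<lambda>v. c)" by (rule poly_fun.const)

lemma poly_fun_add: "poly_fun f \<Longrightarrow> poly_fun g \<Longrightarrow> poly_fun (\<lambda>v. f v + g v)"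
  by (rule poly_fun.add)
lemma poly_fun_mult: "poly_fun f \<Longrightarrow> poly_fun g \<Longrightarrow> poly_fun (\<lambda>v. f v * g v)"
  by (rule poly_fun.mult)

lemma poly_fun_cmult: "poly_fun f \<Longrightarrow> poly_fun (\<lambda>v. c * f v)"
  using poly_fun_mult[OF poly_fun_const] by blast

lemma poly_fun_uminus: "poly_fun f \<Longrightarrow> poly_fun (\<lambda>v. - f v)"
  using poly_fun_cmult[of f "-1"] by simp

lemma poly_fun_diff: "poly_fun f \<Longrightarrow> poly_fun g \<Longrightarrow> poly_fun (\<lambda>v. f v - g v)"
  using poly_fun_add[OF _ poly_fun_uminus, of f g] by simp

lemma poly_fun_sum: "finite S \<Longrightarrow> (\<And>i. i \<in> S \<Longrightarrow> poly_fun (f i)) \<Longrightarrow> poly_fun (\<lambda>v. \<Sum>i\<in>S. f i v)"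
  by (induction S rule: finite_induct) (auto intro: poly_fun_add)

lemma poly_fun_prod: "finite S \<Longrightarrow> (\<And>i. i \<in> S \<Longrightarrow> poly_fun (f i)) \<Longrightarrow> poly_fun (\<lambda>v. \<Prod>i\<in>S. f i v)"
  by (induction S rule: finite_induct) (auto intro: poly_fun_mult)

lemma poly_fun_power: "poly_fun f \<Longrightarrow> poly_fun (\<lambda>v. f v ^ n)"
  by (induction n) (auto intro: poly_fun_mult)

lemma poly_fun_inner: "poly_fun (\<lambda>v. v \<bullet> (b::'a::euclidean_space))"
  by (rule poly_fun.lin) (simp add: linear_iff inner_add_left)

lemma poly_fun_line:
  assumes "poly_fun f"
  shows "\<exists>P. \<forall>t. f (x + t *\<^sub>R d) = poly P t"
  using assms
proof (induction f)
  case (const c)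
  show ?case by (rule exI[of _ "[:c:]"]) simp
next
  case (lin l)
  show ?case
    by (rule exI[of _ "[:l x, l d:]"]) (simp add: linear_add[OF lin] linear_scale[OF lin])
next
  case (add f g)
  then obtain P Q where "\<forall>t. f (x + t *\<^sub>R d) = poly P t" "\<forall>t. g (x + t *\<^sub>R d) = poly Q t" by blast
  then show ?case by (intro exI[of _ "P + Q"]) simp
next
  case (mult f g)
  then obtain P Q where "\<forall>t. f (x + t *\<^sub>R d) = poly P t" "\<forall>t. g (x + t *\<^sub>R d) = poly Q t" by blast
  then show ?case by (intro exI[of _ "P * Q"]) simp
qed

lemma poly_fun_continuous:
  assumes "poly_fun (f :: 'a::euclidean_space \<Rightarrow> real)"
  shows "continuous_on UNIV f"
  using assms
proof (induction f)
  case (lin l)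
  then show ?case by (simp add: linear_continuous_on linear_conv_bounded_linear)
qed (auto intro: continuous_intros)

lemma poly_fun_zero_open:
  assumes "poly_fun (f :: 'a::euclidean_space \<Rightarrow> real)" "open U" "U \<noteq> {}" "\<And>x. x \<in> U \<Longrightarrow> f x = 0"
  shows "f y = 0"
proof -
  obtain x0 where x0: "x0 \<in> U" using assms(3) by blast
  then obtain e where e: "e > 0" "ball x0 e \<subseteq> U" using assms(2) open_contains_ball by blast
  obtain P where P: "\<And>t. f (x0 + t *\<^sub>R (y - x0)) = poly P t" using poly_fun_line[OF assms(1)] by blast
  define c where "c = e / (norm (y - x0) + 1)"
  have "0 < norm (y - x0) + 1" using norm_ge_zero[of "y - x0"] by linarith
  then have c: "c > 0" unfolding c_def using divide_pos_pos e(1) by blast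
  have sub: "{0<..<c} \<subseteq> {t. poly P t = 0}"
  proof
    fix t assume t: "t \<in> {0<..<c}"
    have "norm (t *\<^sub>R (y - x0)) = t * norm (y - x0)" using t by simp
    also have "\<dots> \<le> c * norm (y - x0)" using t by (intro mult_right_mono) auto
    also have "\<dots> < e" unfolding c_def using e \<open>0 < norm (y - x0) + 1\<close>
      by (simp add: field_simps) 
    finally have "x0 + t *\<^sub>R (y - x0) \<in> ball x0 e" by (simp add: dist_norm)
    then have "f (x0 + t *\<^sub>R (y - x0)) = 0" using e assms(4) by blast
    then show "t \<in> {t. poly P t = 0}" using P by simp
  qed
  have "infinite {0<..<c}" using c by simp
  then have "infinite {t. poly P t = 0}" using sub finite_subset by blast
  then have "P = 0" using poly_roots_finite by blast
  then show ?thesis using P[of 1] by simp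
qed

lemma poly_fun_domain:
  assumes "poly_fun (f :: 'a::euclidean_space \<Rightarrow> real)" "poly_fun g" "\<And>x. f x * g x = 0"
  shows "(\<forall>x. f x = 0) \<or> (\<forall>x. g x = 0)"
proof (rule ccontr)
  assume "\<not> ?thesis"
  then obtain x0 y where "f x0 \<noteq> 0" "g y \<noteq> 0" by blast
  let ?U = "{x. f x \<noteq> 0}"
  have "open ?U" using poly_fun_continuous[OF assms(1)]
    using open_Collect_neq[of f "\<lambda>_. 0"] by (simp add: continuous_on_eq_continuous_at)
  moreover have "?U \<noteq> {}" using \<open>f x0 \<noteq> 0\<close> by blast
  moreover have "\<And>x. x \<in> ?U \<Longrightarrow> g x = 0" using assms(3) using mult_eq_0_iff by fastforce
  ultimately have "g y = 0" using poly_fun_zero_open[OF assms(2)] by blast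
  with \<open>g y \<noteq> 0\<close> show False by simp
qed


definition qdvd :: "('v \<Rightarrow> real) \<Rightarrow> ('v::real_vector \<Rightarrow> real) \<Rightarrow> bool" where
  "qdvd Q f \<longleftrightarrow> (\<exists>h. poly_fun h \<and> (\<forall>v. f v = Q v * h v))"

lemma bilinear_linear_l: "bilinear B \<Longrightarrow> linear (\<lambda>v. B v y)"
  by (simp add: bilinear_def)
lemma bilinear_linear_r: "bilinear B \<Longrightarrow> linear (\<lambda>v. B y v)"
  by (simp add: bilinear_def)

lemma Q_poly:
  fixes B :: "'v::euclidean_space \<Rightarrow> 'v \<Rightarrow> real"
  assumes bil: "bilinear B"
  shows "poly_fun (\<lambda>v. B v v)"
proof -
  have eq: "B v v = (\<Sum>b\<in>Basis. (v \<bullet> b) * B b v)" for v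
  proof -
    have "B v v = B (\<Sum>b\<in>Basis. (v \<bullet> b) *\<^sub>R b) v" by (simp add: euclidean_representation)
    also have "\<dots> = (\<Sum>b\<in>Basis. B ((v \<bullet> b) *\<^sub>R b) v)"
      using linear_sum[OF bilinear_linear_l[OF bil, of v]] by simp
    also have "\<dots> = (\<Sum>b\<in>Basis. (v \<bullet> b) * B b v)"
      using bilinear_lmul[OF bil] by simp
    finally show ?thesis .
  qed
  have "poly_fun (\<lambda>v. \<Sum>b\<in>Basis. (v \<bullet> b) * B b v)"
    by (intro poly_fun_sum poly_fun_mult poly_fun_inner poly_fun.lin bilinear_linear_r[OF bil]) auto
  then show ?thesis using eq by simp
qed

lemma bilinear_neg: "bilinear B \<Longrightarrow> bilinear (\<lambda>u v. - B u v)"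
  unfolding bilinear_def by (auto intro: linear_compose_neg)

lemma qdvd_neg: "qdvd (\<lambda>v. - Q v) f \<longleftrightarrow> qdvd Q f"
proof
  assume "qdvd (\<lambda>v. - Q v) f"
  then obtain h where "poly_fun h" "\<forall>v. f v = - Q v * h v" unfolding qdvd_def by blast
  then show "qdvd Q f" unfolding qdvd_def
    by (intro exI[of _ "\<lambda>v. - h v"]) (auto intro: poly_fun_uminus)
next
  assume "qdvd Q f"
  then obtain h where "poly_fun h" "\<forall>v. f v = Q v * h v" unfolding qdvd_def by blast
  then show "qdvd (\<lambda>v. - Q v) f" unfolding qdvd_def
    by (intro exI[of _ "\<lambda>v. - h v"]) (auto intro: poly_fun_uminus)
qed

context
  fixes B :: "'v::euclidean_space \<Rightarrow> 'v \<Rightarrow> real" and e :: 'v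
  assumes bil: "bilinear B" and sym: "\<And>u v. B u v = B v u" and ee: "B e e = 1"
begin

lemma lam_lin: "linear (\<lambda>v. B v e)" by (rule bilinear_linear_l[OF bil])

lemma lam_shift: "B (v + t *\<^sub>R e) e = B v e + t"
  using ee by (simp add: bilinear_ladd[OF bil] bilinear_lmul[OF bil])

lemma Q_shift: "B (v + t *\<^sub>R e) (v + t *\<^sub>R e) = B v v + 2*t*B v e + t^2"
  using ee sym[of e v]
  by (simp add: bilinear_ladd[OF bil] bilinear_radd[OF bil] bilinear_lmul[OF bil]
      bilinear_rmul[OF bil] power2_eq_square algebra_simps)

lemma S_inv: "(B (v + t *\<^sub>R e) e)^2 - B (v + t *\<^sub>R e) (v + t *\<^sub>R e) = (B v e)^2 - B v v"
  unfolding lam_shift Q_shift by (simp add: power2_eq_square algebra_simps)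

lemma S_poly: "poly_fun (\<lambda>v. (B v e)^2 - B v v)"
  by (intro poly_fun_diff poly_fun_power Q_poly[OF bil] poly_fun.lin lam_lin)

definition inv_e :: "('v \<Rightarrow> real) \<Rightarrow> bool" where
  "inv_e g \<longleftrightarrow> (\<forall>v t. g (v + t *\<^sub>R e) = g v)"

lemma inv_e_const: "inv_e (\<lambda>v. c)" by (simp add: inv_e_def)

lemma prod_decomp_real:
  fixes Q h1 a1 l b1 h2 a2 b2 :: real
  shows "(Q*h1 + a1*l + b1) * (Q*h2 + a2*l + b2) = Q*(h1*(Q*h2+a2*l+b2) + (a1*l+b1)*h2 + a1*a2) + (a1*b2+b1*a2)*l + (b1*b2 + a1*a2*(l^2 - Q))"
  by (simp add: power2_eq_square algebra_simps)

lemma decomp: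
  assumes "poly_fun f"
  shows "\<exists>h a b. poly_fun h \<and> poly_fun a \<and> poly_fun b \<and> inv_e a \<and> inv_e b \<and>
            (\<forall>v. f v = B v v * h v + a v * B v e + b v)"
  using assms
proof (induction f)
  case (const c)
  have "poly_fun (\<lambda>v::'v. 0::real)" "poly_fun (\<lambda>v::'v. c)" "inv_e (\<lambda>v. 0)" "inv_e (\<lambda>v. c)"
    by (auto simp: inv_e_const)
  moreover have "\<forall>v. c = B v v * 0 + 0 * B v e + c" by simp
  ultimately show ?case by blast
next
  case (lin l)
  have bl: "linear (\<lambda>v. l v - l e * B v e)"
    using lin unfolding linear_iff
    by (simp add: linear_add[OF lin] linear_scale[OF lin] bilinear_ladd[OF bil] bilinear_lmul[OF bil] algebra_simps)
  have i1: "inv_e (\<lambda>v. l v - l e * B v e)"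
    unfolding inv_e_def
  proof (intro allI)
    fix v t
    have "l (v + t *\<^sub>R e) = l v + t * l e" using linear_add[OF lin] linear_scale[OF lin] by simp
    then show "l (v + t *\<^sub>R e) - l e * B (v + t *\<^sub>R e) e = l v - l e * B v e"
      unfolding lam_shift by (simp add: algebra_simps)
  qed
  have "poly_fun (\<lambda>v::'v. 0::real)" "poly_fun (\<lambda>v::'v. l e)" "inv_e (\<lambda>v. l e)"
    by (auto simp: inv_e_const)
  moreover have "poly_fun (\<lambda>v. l v - l e * B v e)" using bl by (rule poly_fun.lin)
  moreover have "\<forall>v. l v = B v v * 0 + l e * B v e + (l v - l e * B v e)" by simp
  ultimately show ?case using i1 by blast
next
  case (add f g)
  then obtain h1 a1 b1 h2 a2 b2 where H: "poly_fun h1" "poly_fun a1" "poly_fun b1" "inv_e a1" "inv_e b1"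
    "\<forall>v. f v = B v v * h1 v + a1 v * B v e + b1 v"
    "poly_fun h2" "poly_fun a2" "poly_fun b2" "inv_e a2" "inv_e b2"
    "\<forall>v. g v = B v v * h2 v + a2 v * B v e + b2 v" by blast
  have "poly_fun (\<lambda>v. h1 v + h2 v)" "poly_fun (\<lambda>v. a1 v + a2 v)" "poly_fun (\<lambda>v. b1 v + b2 v)"
    using H(1-3) H(7-9) by (auto intro: poly_fun_add)
  moreover have "inv_e (\<lambda>v. a1 v + a2 v)" "inv_e (\<lambda>v. b1 v + b2 v)"
    using H(4,5,10,11) unfolding inv_e_def by auto
  moreover have "\<forall>v. f v + g v = B v v * (h1 v + h2 v) + (a1 v + a2 v) * B v e + (b1 v + b2 v)"
  proof
    fix v show "f v + g v = B v v * (h1 v + h2 v) + (a1 v + a2 v) * B v e + (b1 v + b2 v)"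
      unfolding H(6)[rule_format] H(12)[rule_format] by (simp add: algebra_simps)
  qed
  ultimately show ?case by blast
next
  case (mult f g)
  then obtain h1 a1 b1 h2 a2 b2 where H: "poly_fun h1" "poly_fun a1" "poly_fun b1" "inv_e a1" "inv_e b1"
    "\<forall>v. f v = B v v * h1 v + a1 v * B v e + b1 v"
    "poly_fun h2" "poly_fun a2" "poly_fun b2" "inv_e a2" "inv_e b2"
    "\<forall>v. g v = B v v * h2 v + a2 v * B v e + b2 v" by blast
  define S where "S = (\<lambda>v. (B v e)^2 - B v v)"
  have Sp: "poly_fun S" using S_poly S_def by simp
  have Si: "inv_e S" unfolding inv_e_def S_def using S_inv by simp
  have pl: "poly_fun (\<lambda>v. B v e)" by (rule poly_fun.lin[OF lam_lin])
  have eq: "\<forall>v. f v * g v = B v v * (h1 v * g v + (a1 v * B v e + b1 v) * h2 v + a1 v * a2 v)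
     + (a1 v * b2 v + b1 v * a2 v) * B v e + (b1 v * b2 v + a1 v * a2 v * S v)"
  proof
    fix v
    have "f v * g v = (B v v * h1 v + a1 v * B v e + b1 v) * (B v v * h2 v + a2 v * B v e + b2 v)"
      using H(6,12) by simp
    also have "\<dots> = B v v * (h1 v * (B v v * h2 v + a2 v * B v e + b2 v) + (a1 v * B v e + b1 v) * h2 v + a1 v * a2 v)
     + (a1 v * b2 v + b1 v * a2 v) * B v e + (b1 v * b2 v + a1 v * a2 v * ((B v e)^2 - B v v))"
      by (rule prod_decomp_real)
    finally show "f v * g v = B v v * (h1 v * g v + (a1 v * B v e + b1 v) * h2 v + a1 v * a2 v)
     + (a1 v * b2 v + b1 v * a2 v) * B v e + (b1 v * b2 v + a1 v * a2 v * S v)"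
      using H(12) unfolding S_def by simp
  qed
  have "poly_fun (\<lambda>v. h1 v * g v + (a1 v * B v e + b1 v) * h2 v + a1 v * a2 v)"
    using H(1-3) H(7-9) mult.hyps pl by (intro poly_fun_add poly_fun_mult) auto
  moreover have "poly_fun (\<lambda>v. a1 v * b2 v + b1 v * a2 v)" "poly_fun (\<lambda>v. b1 v * b2 v + a1 v * a2 v * S v)"
    using H(1-3) H(7-9) Sp by (intro poly_fun_add poly_fun_mult; simp)+
  moreover have "inv_e (\<lambda>v. a1 v * b2 v + b1 v * a2 v)" "inv_e (\<lambda>v. b1 v * b2 v + a1 v * a2 v * S v)"
    using H(4,5,10,11) Si unfolding inv_e_def by auto
  ultimately show ?case using eq by blast
qed

lemma uniq:
  assumes h: "poly_fun h" and a: "inv_e a" and b: "inv_e b"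
    and eq: "\<And>v. B v v * h v = a v * B v e + b v"
  shows "a v = 0 \<and> b v = 0"
proof -
  obtain P where P: "\<And>t. h (v + t *\<^sub>R e) = poly P t" using poly_fun_line[OF h] by blast
  define Qp where "Qp = [:B v v, 2 * B v e, 1:]"
  define L where "L = [:a v * B v e + b v, a v:]"
  have "poly (Qp * P) t = poly L t" for t
  proof -
    have "poly (Qp * P) t = B (v + t *\<^sub>R e) (v + t *\<^sub>R e) * h (v + t *\<^sub>R e)"
      unfolding Q_shift P Qp_def by (simp add: power2_eq_square algebra_simps)
    also have "\<dots> = a (v + t *\<^sub>R e) * B (v + t *\<^sub>R e) e + b (v + t *\<^sub>R e)" by (rule eq)
    also have "\<dots> = poly L t" using a b unfolding inv_e_def L_def lam_shift by (simp add: algebra_simps)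
    finally show ?thesis .
  qed
  then have "poly (Qp * P) = poly L" by (rule ext)
  then have PL: "Qp * P = L" by (simp add: poly_eq_poly_eq_iff)
  have "P = 0"
  proof (rule ccontr)
    assume "P \<noteq> 0"
    then have "degree (Qp * P) = degree Qp + degree P" by (intro degree_mult_eq) (auto simp: Qp_def)
    moreover have "degree Qp = 2" by (simp add: Qp_def)
    moreover have "degree L \<le> 1" by (simp add: L_def)
    ultimately show False using PL by simp
  qed
  then have "L = 0" using PL by simp
  then show ?thesis unfolding L_def by auto
qed

lemma qdvd_iff_decomp:
  assumes "poly_fun h" "inv_e a" "inv_e b" "\<forall>v. f v = B v v * h v + a v * B v e + b v"
  shows "qdvd (\<lambda>v. B v v) f \<longleftrightarrow> (\<forall>v. a v = 0 \<and> b v = 0)"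
proof
  assume "qdvd (\<lambda>v. B v v) f"
  then obtain h' where h': "poly_fun h'" "\<forall>v. f v = B v v * h' v" unfolding qdvd_def by blast
  have "\<And>v. B v v * (h' v - h v) = a v * B v e + b v" using h' assms(4) by (simp add: algebra_simps)
  then show "\<forall>v. a v = 0 \<and> b v = 0" using uniq[OF poly_fun_diff[OF h'(1) assms(1)] assms(2,3)] by blast
next
  assume "\<forall>v. a v = 0 \<and> b v = 0"
  then show "qdvd (\<lambda>v. B v v) f" using assms unfolding qdvd_def by auto
qed

lemma real_norm_lemma:
  fixes a b c d S :: real
  assumes "S < 0" "a * d + b * c = 0" "b * d + a * c * S = 0"
  shows "(a = 0 \<and> b = 0) \<or> (c = 0 \<and> d = 0)"
proof -
  have "(b^2 - a^2 * S) * (d^2 - c^2 * S) = (b * d + a * c * S)^2 - S * (a * d + b * c)^2"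
    by (simp add: power2_eq_square algebra_simps)
  then have "(b^2 - a^2 * S) * (d^2 - c^2 * S) = 0" using assms by simp
  then have "b^2 - a^2 * S = 0 \<or> d^2 - c^2 * S = 0" by simp
  moreover have "b^2 - a^2 * S = 0 \<Longrightarrow> a = 0 \<and> b = 0"
  proof -
    assume h: "b^2 - a^2 * S = 0"
    have "a^2 * S \<le> 0" using assms(1) by (intro mult_nonneg_nonpos) auto
    then have "a^2 * (-S) \<ge> 0" "b^2 \<ge> 0" by auto
    then have "a^2 * (-S) = 0" "b^2 = 0" using h by linarith+
    then show ?thesis using assms(1) by simp
  qed
  moreover have "d^2 - c^2 * S = 0 \<Longrightarrow> c = 0 \<and> d = 0"
  proof -
    assume h: "d^2 - c^2 * S = 0"
    have "c^2 * S \<le> 0" using assms(1) by (intro mult_nonneg_nonpos) auto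
    then have "c^2 * (-S) \<ge> 0" "d^2 \<ge> 0" by auto
    then have "c^2 * (-S) = 0" "d^2 = 0" using h by linarith+
    then show ?thesis using assms(1) by simp
  qed
  ultimately show ?thesis by blast
qed

lemma Q_prime:
  assumes u: "B u e = 0" "B u u > 0"
    and f: "poly_fun f" and g: "poly_fun g"
    and fg: "qdvd (\<lambda>v. B v v) (\<lambda>v. f v * g v)"
  shows "qdvd (\<lambda>v. B v v) f \<or> qdvd (\<lambda>v. B v v) g"
proof -
  obtain h1 a1 b1 where H1: "poly_fun h1" "poly_fun a1" "poly_fun b1" "inv_e a1" "inv_e b1"
    "\<forall>v. f v = B v v * h1 v + a1 v * B v e + b1 v" using decomp[OF f] by blast
  obtain h2 a2 b2 where H2: "poly_fun h2" "poly_fun a2" "poly_fun b2" "inv_e a2" "inv_e b2"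
    "\<forall>v. g v = B v v * h2 v + a2 v * B v e + b2 v" using decomp[OF g] by blast
  define S where "S = (\<lambda>v. (B v e)^2 - B v v)"
  have Sp: "poly_fun S" using S_poly S_def by simp
  have Si: "inv_e S" unfolding inv_e_def S_def using S_inv by simp
  have pl: "poly_fun (\<lambda>v. B v e)" by (rule poly_fun.lin[OF lam_lin])
  have eq: "\<forall>v. f v * g v = B v v * (h1 v * g v + (a1 v * B v e + b1 v) * h2 v + a1 v * a2 v)
     + (a1 v * b2 v + b1 v * a2 v) * B v e + (b1 v * b2 v + a1 v * a2 v * S v)"
  proof
    fix v
    have "f v * g v = (B v v * h1 v + a1 v * B v e + b1 v) * (B v v * h2 v + a2 v * B v e + b2 v)"
      using H1(6) H2(6) by simp
    also have "\<dots> = B v v * (h1 v * (B v v * h2 v + a2 v * B v e + b2 v) + (a1 v * B v e + b1 v) * h2 v + a1 v * a2 v)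
     + (a1 v * b2 v + b1 v * a2 v) * B v e + (b1 v * b2 v + a1 v * a2 v * ((B v e)^2 - B v v))"
      by (rule prod_decomp_real)
    finally show "f v * g v = B v v * (h1 v * g v + (a1 v * B v e + b1 v) * h2 v + a1 v * a2 v)
     + (a1 v * b2 v + b1 v * a2 v) * B v e + (b1 v * b2 v + a1 v * a2 v * S v)"
      using H2(6) unfolding S_def by simp
  qed
  have "poly_fun (\<lambda>v. h1 v * g v + (a1 v * B v e + b1 v) * h2 v + a1 v * a2 v)"
    using H1(1-5) H2(1-5) g pl by (intro poly_fun_add poly_fun_mult) auto
  moreover have "inv_e (\<lambda>v. a1 v * b2 v + b1 v * a2 v)" "inv_e (\<lambda>v. b1 v * b2 v + a1 v * a2 v * S v)"
    using H1(4,5) H2(4,5) Si unfolding inv_e_def by auto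
  ultimately have Z: "\<forall>v. a1 v * b2 v + b1 v * a2 v = 0 \<and> b1 v * b2 v + a1 v * a2 v * S v = 0"
    using qdvd_iff_decomp[OF _ _ _ eq] fg by blast
  define F where "F = (\<lambda>v. a1 v ^ 2 + b1 v ^ 2)"
  define G where "G = (\<lambda>v. a2 v ^ 2 + b2 v ^ 2)"
  have Fp: "poly_fun F" "poly_fun G" unfolding F_def G_def
    using H1 H2 by (auto intro!: poly_fun_add poly_fun_power)
  let ?U = "{v. S v < 0}"
  have "open ?U" using poly_fun_continuous[OF Sp]
    by (simp add: continuous_on_eq_continuous_at open_Collect_less)
  moreover have "u \<in> ?U" using u unfolding S_def by simp
  moreover have "\<And>v. v \<in> ?U \<Longrightarrow> F v * G v = 0"
  proof -
    fix v assume "v \<in> ?U"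
    then have "(a1 v = 0 \<and> b1 v = 0) \<or> (a2 v = 0 \<and> b2 v = 0)"
      using real_norm_lemma[of "S v" "a1 v" "b2 v" "b1 v" "a2 v"] Z
      by (simp add: algebra_simps)
    then show "F v * G v = 0" unfolding F_def G_def by auto
  qed
  ultimately have "\<And>y. F y * G y = 0"
    using poly_fun_zero_open[OF poly_fun_mult[OF Fp]] by blast
  then have "(\<forall>x. F x = 0) \<or> (\<forall>x. G x = 0)" using poly_fun_domain[OF Fp] by blast
  moreover have "F x = 0 \<Longrightarrow> a1 x = 0 \<and> b1 x = 0" for x
    unfolding F_def by (simp add: add_nonneg_eq_0_iff)
  moreover have "G x = 0 \<Longrightarrow> a2 x = 0 \<and> b2 x = 0" for x
    unfolding G_def by (simp add: add_nonneg_eq_0_iff)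
  ultimately show ?thesis
    using qdvd_iff_decomp[OF H1(1,4,5,6)] qdvd_iff_decomp[OF H2(1,4,5,6)] by blast
qed

end


lemma qdvd_mult_left: "qdvd Q f \<Longrightarrow> poly_fun g \<Longrightarrow> qdvd Q (\<lambda>v. g v * f v)"
proof -
  assume "qdvd Q f" "poly_fun g"
  then obtain h where "poly_fun h" "\<forall>v. f v = Q v * h v" unfolding qdvd_def by blast
  then show ?thesis unfolding qdvd_def using \<open>poly_fun g\<close>
    by (intro exI[of _ "\<lambda>v. g v * h v"]) (auto intro: poly_fun_mult)
qed

lemma qdvd_zero: "qdvd Q (\<lambda>v. 0)"
  unfolding qdvd_def by (auto intro!: exI[of _ "\<lambda>v. 0"])

context
  fixes B :: "'v::euclidean_space \<Rightarrow> 'v \<Rightarrow> real" and e :: 'v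
  assumes bil: "bilinear B" and sym: "\<And>u v. B u v = B v u" and ee: "B e e = 1"
begin

lemma Q_cancel:
  assumes X: "poly_fun X" and Y: "poly_fun Y" and eq: "\<And>v. B v v * X v = B v v * Y v"
  shows "X y = Y y"
proof -
  let ?U = "{v. B v v \<noteq> 0}"
  have "open ?U" using poly_fun_continuous[OF Q_poly[OF bil]]
    using open_Collect_neq[of "\<lambda>v. B v v" "\<lambda>_. 0"] by (simp add: continuous_on_eq_continuous_at)
  moreover have "e \<in> ?U" using ee by simp
  moreover have "\<And>v. v \<in> ?U \<Longrightarrow> X v - Y v = 0" 
  proof -
    fix v assume "v \<in> ?U"
    then have "B v v \<noteq> 0" by simp
    with eq[of v] show "X v - Y v = 0" by simp
  qed
  ultimately have "X y - Y y = 0" using poly_fun_zero_open[OF poly_fun_diff[OF X Y], of ?U y] by blast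
  then show ?thesis by simp
qed

lemma pow_bound:
  assumes M: "poly_fun M" and v0: "M v0 \<noteq> 0"
  shows "\<exists>k h. poly_fun h \<and> \<not> qdvd (\<lambda>v. B v v) h \<and> (\<forall>v. M v = (B v v)^k * h v)"
proof -
  obtain P where P: "\<And>t. M (v0 + t *\<^sub>R e) = poly P t" using poly_fun_line[OF M] by blast
  have P0: "P \<noteq> 0" using P[of 0] v0 by auto
  define Qp where "Qp = [:B v0 v0, 2 * B v0 e, 1:]"
  have Qp: "B (v0 + t *\<^sub>R e) (v0 + t *\<^sub>R e) = poly Qp t" for t
    unfolding Q_shift[OF bil sym ee] Qp_def by (simp add: power2_eq_square algebra_simps)
  define K where "K = {k. \<exists>h. poly_fun h \<and> (\<forall>v. M v = (B v v)^k * h v)}"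
  have bound: "2 * k \<le> degree P" if "k \<in> K" for k
  proof -
    obtain h where h: "poly_fun h" "\<forall>v. M v = (B v v)^k * h v" using \<open>k \<in> K\<close> K_def by blast
    obtain H where H: "\<And>t. h (v0 + t *\<^sub>R e) = poly H t" using poly_fun_line[OF h(1)] by blast
    have "poly P t = poly (Qp^k * H) t" for t
      using P[of t] h(2) H[of t] Qp[of t] by simp
    then have "poly P = poly (Qp^k * H)" by (rule ext)
    then have PQ: "P = Qp^k * H" by (simp add: poly_eq_poly_eq_iff)
    then have "H \<noteq> 0" using P0 by auto
    moreover have "Qp \<noteq> 0" "degree Qp = 2" by (auto simp: Qp_def)
    ultimately have "degree P = k * 2 + degree H" unfolding PQ
      by (simp add: degree_mult_eq degree_power_eq)
    then show ?thesis by simp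
  qed
  have "0 \<in> K" unfolding K_def using M by auto
  have "K \<subseteq> {..degree P}"
  proof
    fix x assume "x \<in> K"
    then have "2 * x \<le> degree P" by (rule bound)
    then show "x \<in> {..degree P}" by simp
  qed
  then have fin: "finite K" using finite_subset by blast
  define k where "k = Max K"
  have "k \<in> K" unfolding k_def using fin \<open>0 \<in> K\<close> by (intro Max_in) auto
  then obtain h where h: "poly_fun h" "\<forall>v. M v = (B v v)^k * h v" using K_def by blast
  have "\<not> qdvd (\<lambda>v. B v v) h"
  proof
    assume "qdvd (\<lambda>v. B v v) h"
    then obtain h' where h': "poly_fun h'" "\<forall>v. h v = B v v * h' v" unfolding qdvd_def by blast
    then have "Suc k \<in> K" unfolding K_def using h(2) by (auto intro!: exI[of _ h'])
    then have "Suc k \<le> k" unfolding k_def using fin by (simp add: Max_ge)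
    then show False by simp
  qed
  then show ?thesis using h by blast
qed

end


definition gmat :: "nat \<Rightarrow> (nat \<Rightarrow> 'v \<Rightarrow> 'w::euclidean_space) \<Rightarrow> (nat \<Rightarrow> nat) \<Rightarrow> (nat \<Rightarrow> 'w) \<Rightarrow> 'v \<Rightarrow> real Matrix.mat" where
  "gmat m xs \<tau> \<sigma> v = Matrix.mat m m (\<lambda>(k,i). xs (\<tau> k) v \<bullet> \<sigma> i)"

lemma gmat_carrier[simp]: "gmat m xs \<tau> \<sigma> v \<in> carrier_mat m m"
  unfolding gmat_def by simp

lemma gmat_index[simp]: "k < m \<Longrightarrow> i < m \<Longrightarrow> gmat m xs \<tau> \<sigma> v $$ (k,i) = xs (\<tau> k) v \<bullet> \<sigma> i"
  unfolding gmat_def by simp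

lemma det_nat_eq: "det_nat r (\<lambda>i k. xs k v \<bullet> \<sigma> i) = Determinant.det (gmat r xs id \<sigma> v)"
proof -
  let ?A = "Matrix.mat r r (\<lambda>(i,k). xs k v \<bullet> \<sigma> i)"
  have "det_nat r (\<lambda>i k. xs k v \<bullet> \<sigma> i) = Determinant.det ?A"
    unfolding det_nat_def det_def'[OF mat_carrier]
    by (intro sum.cong) (auto simp: atLeast0LessThan permutes_def intro!: prod.cong)
  also have "\<dots> = Determinant.det (transpose_mat ?A)" using det_transpose[of ?A r] by simp
  also have "transpose_mat ?A = gmat r xs id \<sigma> v" unfolding gmat_def by (intro eq_matI) auto
  finally show ?thesis .
qed

lemma det_poly:
  assumes "\<And>i j. i < n \<Longrightarrow> j < n \<Longrightarrow> poly_fun (\<lambda>v. E v i j)"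
  shows "poly_fun (\<lambda>v. Determinant.det (Matrix.mat n n (\<lambda>(i,j). E v i j)))"
proof -
  have eq: "Determinant.det (Matrix.mat n n (\<lambda>(i,j). E v i j)) =
     (\<Sum>p\<in>{p. p permutes {0..<n}}. of_int (sign p) * (\<Prod>i\<in>{0..<n}. E v i (p i)))" for v
    unfolding det_def'[OF mat_carrier]
    by (intro sum.cong refl arg_cong2[where f="(*)"] prod.cong)
      (auto simp: permutes_in_image)
  have "poly_fun (\<lambda>v. \<Sum>p\<in>{p. p permutes {0..<n}}. of_int (sign p) * (\<Prod>i\<in>{0..<n}. E v i (p i)))"
  proof (intro poly_fun_sum poly_fun_cmult poly_fun_prod)
    show "finite {p. p permutes {0..<n}}" by (simp add: finite_permutations)
  next
    fix p i assume "p \<in> {p. p permutes {0..<n}}" "i \<in> {0..<n}"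
    then show "poly_fun (\<lambda>v. E v i (p i))" using assms by (auto simp: permutes_in_image)
  qed simp
  then show ?thesis using eq by simp
qed

lemma gdet_poly:
  assumes "\<And>k. k < m \<Longrightarrow> poly_map (xs (\<tau> k))" "\<And>i. i < m \<Longrightarrow> \<sigma> i \<in> Basis"
  shows "poly_fun (\<lambda>v. Determinant.det (gmat m xs \<tau> \<sigma> v))"
  unfolding gmat_def using assms by (intro det_poly) (auto simp: poly_map_def)

lemma cofactor_mat:
  "Determinant.cofactor (Matrix.mat (Suc n) (Suc n) f) k l =
     (-1)^(k+l) * Determinant.det (Matrix.mat n n (\<lambda>(a,b). f (if a < k then a else Suc a, if b < l then b else Suc b)))"
  unfolding Determinant.cofactor_def mat_delete_def
  by (intro arg_cong2[where f="(*)"] refl arg_cong[where f=Determinant.det] eq_matI) auto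

lemma cofactor_poly:
  assumes "\<And>i j. i < Suc n \<Longrightarrow> j < Suc n \<Longrightarrow> poly_fun (\<lambda>v. E v i j)"
  shows "poly_fun (\<lambda>v. Determinant.cofactor (Matrix.mat (Suc n) (Suc n) (\<lambda>(i,j). E v i j)) k l)"
  unfolding cofactor_mat
  by (intro poly_fun_cmult det_poly) (use assms in auto)

lemma cofactor_row_indep:
  assumes "A \<in> carrier_mat n n" "A' \<in> carrier_mat n n"
    and "\<And>a b. a < n \<Longrightarrow> b < n \<Longrightarrow> a \<noteq> j \<Longrightarrow> A $$ (a,b) = A' $$ (a,b)"
  shows "Determinant.cofactor A j i = Determinant.cofactor A' j i"
  unfolding Determinant.cofactor_def mat_delete_def using assms
  by (intro arg_cong2[where f="(*)"] refl arg_cong[where f=Determinant.det] eq_matI) auto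

lemma cofactor_col_indep:
  assumes "A \<in> carrier_mat n n" "A' \<in> carrier_mat n n"
    and "\<And>a b. a < n \<Longrightarrow> b < n \<Longrightarrow> b \<noteq> j \<Longrightarrow> A $$ (a,b) = A' $$ (a,b)"
  shows "Determinant.cofactor A i j = Determinant.cofactor A' i j"
  unfolding Determinant.cofactor_def mat_delete_def using assms
  by (intro arg_cong2[where f="(*)"] refl arg_cong[where f=Determinant.det] eq_matI) auto

lemma row_replace:
  assumes j: "j < r"
  shows "Determinant.det (gmat r (xs(j := w)) id \<sigma> v) =
     (\<Sum>i<r. (w v \<bullet> \<sigma> i) * Determinant.cofactor (gmat r xs id \<sigma> v) j i)"
proof -
  have "Determinant.det (gmat r (xs(j := w)) id \<sigma> v) =
     (\<Sum>i<r. gmat r (xs(j := w)) id \<sigma> v $$ (j,i) * Determinant.cofactor (gmat r (xs(j := w)) id \<sigma> v) j i)"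
    by (rule laplace_expansion_row[OF gmat_carrier j])
  also have "\<dots> = (\<Sum>i<r. (w v \<bullet> \<sigma> i) * Determinant.cofactor (gmat r xs id \<sigma> v) j i)"
  proof (intro sum.cong refl)
    fix i assume "i \<in> {..<r}"
    then show "gmat r (xs(j := w)) id \<sigma> v $$ (j,i) * Determinant.cofactor (gmat r (xs(j := w)) id \<sigma> v) j i
       = (w v \<bullet> \<sigma> i) * Determinant.cofactor (gmat r xs id \<sigma> v) j i"
      using j by (simp, intro disjI2 cofactor_row_indep[where n=r]) auto
  qed
  finally show ?thesis .
qed

lemma identical_rows_zero:
  assumes "j < r" "c < r" "c \<noteq> j"
  shows "Determinant.det (gmat r (xs(j := xs c)) id \<sigma> v) = 0"
  by (rule det_identical_rows[OF gmat_carrier assms(3) assms(2) assms(1)])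
    (use assms in \<open>auto simp: gmat_def\<close>)

lemma col_expand:
  shows "Determinant.det (gmat (Suc n) xs \<tau> (\<sigma>(n := b)) v) =
     (\<Sum>k<Suc n. (xs (\<tau> k) v \<bullet> b) * Determinant.cofactor (gmat (Suc n) xs \<tau> \<sigma> v) k n)"
proof -
  have "Determinant.det (gmat (Suc n) xs \<tau> (\<sigma>(n := b)) v) =
     (\<Sum>k<Suc n. gmat (Suc n) xs \<tau> (\<sigma>(n := b)) v $$ (k,n) * Determinant.cofactor (gmat (Suc n) xs \<tau> (\<sigma>(n := b)) v) k n)"
    by (rule laplace_expansion_column[OF gmat_carrier]) simp
  also have "\<dots> = (\<Sum>k<Suc n. (xs (\<tau> k) v \<bullet> b) * Determinant.cofactor (gmat (Suc n) xs \<tau> \<sigma> v) k n)"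
  proof (intro sum.cong refl)
    fix k assume "k \<in> {..<Suc n}"
    then show "gmat (Suc n) xs \<tau> (\<sigma>(n := b)) v $$ (k,n) * Determinant.cofactor (gmat (Suc n) xs \<tau> (\<sigma>(n := b)) v) k n
       = (xs (\<tau> k) v \<bullet> b) * Determinant.cofactor (gmat (Suc n) xs \<tau> \<sigma> v) k n"
      by (simp, intro disjI2 cofactor_col_indep[where n="Suc n"]) auto
  qed
  finally show ?thesis .
qed

lemma cofactor_last:
  assumes "\<And>k. k < n \<Longrightarrow> \<tau>1 k = \<tau>0 k"
  shows "Determinant.cofactor (gmat (Suc n) xs \<tau>1 \<sigma> v) n n = Determinant.det (gmat n xs \<tau>0 \<sigma> v)"
  unfolding gmat_def cofactor_mat using assms
  by (simp add: power_add[symmetric] mult_2[symmetric], intro arg_cong[where f=Determinant.det] eq_matI) auto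

lemma identical_cols_zero:
  assumes "i0 < n"
  shows "Determinant.det (gmat (Suc n) xs \<tau> (\<sigma>(n := \<sigma> i0)) v) = 0"
  by (rule det_identical_columns[OF gmat_carrier, of i0 n]) (use assms in \<open>auto simp: gmat_def\<close>)

lemma perm_cols:
  assumes inj: "inj_on \<tau> {..<r}" and rng: "\<tau> ` {..<r} \<subseteq> {..<r}"
  shows "\<exists>c. \<forall>v. Determinant.det (gmat r xs \<tau> \<sigma> v) = c * Determinant.det (gmat r xs id \<sigma> v)"
proof -
  define p where "p = (\<lambda>k. if k < r then \<tau> k else k)"
  have "p ` {0..<r} = \<tau> ` {0..<r}" unfolding p_def by auto
  have injp: "inj_on p {0..<r}" using inj unfolding p_def inj_on_def by auto
  have imp: "p ` {0..<r} \<subseteq> {0..<r}" using rng unfolding p_def by (auto simp: image_subset_iff)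
  have "p ` {0..<r} = {0..<r}" by (rule endo_inj_surj[OF _ imp injp]) simp
  then have "bij_betw p {0..<r} {0..<r}" using injp by (simp add: bij_betw_def)
  then have pp: "p permutes {0..<r}" by (rule bij_imp_permutes) (auto simp: p_def)
  have "Determinant.det (gmat r xs \<tau> \<sigma> v) = signof p * Determinant.det (gmat r xs id \<sigma> v)" for v
  proof -
    have "Determinant.det (Matrix.mat r r (\<lambda>(i,j). gmat r xs id \<sigma> v $$ (p i, j))) = signof p * Determinant.det (gmat r xs id \<sigma> v)"
      by (rule det_permute_rows[OF gmat_carrier pp])
    moreover have "Matrix.mat r r (\<lambda>(i,j). gmat r xs id \<sigma> v $$ (p i, j)) = gmat r xs \<tau> \<sigma> v"
      using rng by (intro eq_matI) (auto simp: gmat_def p_def image_subset_iff)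
    ultimately show ?thesis by metis
  qed
  then show ?thesis by blast
qed



lemma poly_map_inner:
  assumes "poly_map (x :: 'v::real_vector \<Rightarrow> 'w::euclidean_space)"
  shows "poly_fun (\<lambda>v. x v \<bullet> w)"
proof -
  have "x v \<bullet> w = (\<Sum>b\<in>Basis. (x v \<bullet> b) * (w \<bullet> b))" for v
    by (rule euclidean_inner)
  moreover have "poly_fun (\<lambda>v. \<Sum>b\<in>Basis. (x v \<bullet> b) * (w \<bullet> b))"
  proof (rule poly_fun_sum)
    fix b :: 'w assume "b \<in> Basis"
    then have "poly_fun (\<lambda>v. x v \<bullet> b)" using assms unfolding poly_map_def by blast
    then show "poly_fun (\<lambda>v. (x v \<bullet> b) * (w \<bullet> b))" by (rule poly_fun_mult) simp
  qed simp
  ultimately show ?thesis by simp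
qed

lemma submodule_sum:
  assumes D: "poly_submodule D" and fin: "finite K"
    and c: "\<And>k. k \<in> K \<Longrightarrow> poly_fun (c k)" and x: "\<And>k. k \<in> K \<Longrightarrow> x k \<in> D"
  shows "(\<lambda>v. \<Sum>k\<in>K. c k v *\<^sub>R x k v) \<in> D"
  using fin c x
proof (induction K rule: finite_induct)
  have z: "(\<lambda>v. 0) \<in> D" using D unfolding poly_submodule_def by (elim conjE)
  case empty
  then show ?case using z by simp
next
  have add: "\<forall>x\<in>D. \<forall>y\<in>D. (\<lambda>v. x v + y v) \<in> D" using D unfolding poly_submodule_def by (elim conjE)
  have sm: "\<forall>f x. poly_fun f \<longrightarrow> x \<in> D \<longrightarrow> (\<lambda>v. f v *\<^sub>R x v) \<in> D" using D unfolding poly_submodule_def by (elim conjE)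
  case (insert a F)
  have h1: "(\<lambda>v. c a v *\<^sub>R x a v) \<in> D" using sm insert.prems by simp
  have h2: "(\<lambda>v. \<Sum>k\<in>F. c k v *\<^sub>R x k v) \<in> D" using insert by simp
  have "(\<lambda>v. c a v *\<^sub>R x a v + (\<Sum>k\<in>F. c k v *\<^sub>R x k v)) \<in> D"
    using add[rule_format, OF h1 h2] by simp
  then show ?case using insert.hyps by simp
qed

lemma not_qdvd_one:
  assumes bil: "bilinear B"
  shows "\<not> qdvd (\<lambda>v. B v v) (\<lambda>v. 1)"
proof
  assume "qdvd (\<lambda>v. B v v) (\<lambda>v. 1)"
  then obtain h where "\<forall>v. 1 = B v v * h v" unfolding qdvd_def by blast
  then have "1 = B 0 0 * h 0" by blast
  then show False using bilinear_lzero[OF bil] by simp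
qed



lemma step:
  fixes B :: "'v::euclidean_space \<Rightarrow> 'v \<Rightarrow> real"
    and D :: "('v \<Rightarrow> 'w::euclidean_space) set"
    and xs :: "nat \<Rightarrow> 'v \<Rightarrow> 'w"
  assumes bil: "bilinear B"
    and D: "poly_submodule D"
    and sat: "\<forall>x. poly_map x \<longrightarrow> (\<lambda>v. B v v *\<^sub>R x v) \<in> D \<longrightarrow> x \<in> D"
    and xs: "\<forall>i<r. xs i \<in> D"
    and allq: "\<forall>\<sigma>. inj_on \<sigma> {..<r} \<and> \<sigma> ` {..<r} \<subseteq> Basis \<longrightarrow>
                  qdvd (\<lambda>v. B v v) (\<lambda>v. Determinant.det (gmat r xs id \<sigma> v))"
  shows "\<exists>j<r. \<exists>y\<in>D. \<exists>a. poly_fun a \<and> \<not> qdvd (\<lambda>v. B v v) a \<and>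
     (\<forall>\<sigma> v. B v v * Determinant.det (gmat r (xs(j := y)) id \<sigma> v) = a v * Determinant.det (gmat r xs id \<sigma> v))"
proof -
  define Q where "Q = (\<lambda>v. B v v)"
  have Dpm: "\<And>x. x \<in> D \<Longrightarrow> poly_map x" using D unfolding poly_submodule_def by blast
  have xpm: "\<And>i. i < r \<Longrightarrow> poly_map (xs i)" using xs Dpm by blast
  define adm where "adm = (\<lambda>m \<tau> (\<sigma>::nat \<Rightarrow> 'w). inj_on \<tau> {..<m} \<and> \<tau> ` {..<m} \<subseteq> {..<r} \<and>
      inj_on \<sigma> {..<m} \<and> \<sigma> ` {..<m} \<subseteq> Basis)"
  define S where "S = {m. m \<le> r \<and> (\<exists>\<tau> \<sigma>. adm m \<tau> \<sigma> \<and> \<not> qdvd Q (\<lambda>v. Determinant.det (gmat m xs \<tau> \<sigma> v)))}"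
  have "0 \<in> S"
  proof -
    have "adm 0 id (\<lambda>_. 0)" unfolding adm_def by simp
    moreover have "(\<lambda>v. Determinant.det (gmat 0 xs id (\<lambda>_. 0) v)) = (\<lambda>v. 1)" by simp
    ultimately show ?thesis unfolding S_def Q_def using not_qdvd_one[OF bil] by force
  qed
  have finS: "finite S" unfolding S_def by (rule finite_subset[of _ "{..r}"]) auto
  define \<rho> where "\<rho> = Max S"
  have "\<rho> \<in> S" unfolding \<rho>_def using finS \<open>0 \<in> S\<close> by (intro Max_in) auto
  then obtain \<tau>0 \<sigma>0 where \<rho>r: "\<rho> \<le> r" and adm0: "adm \<rho> \<tau>0 \<sigma>0"
    and nq0: "\<not> qdvd Q (\<lambda>v. Determinant.det (gmat \<rho> xs \<tau>0 \<sigma>0 v))"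
    unfolding S_def by blast
  have "\<rho> \<noteq> r"
  proof
    assume "\<rho> = r"
    then obtain c where c: "\<forall>v. Determinant.det (gmat r xs \<tau>0 \<sigma>0 v) = c * Determinant.det (gmat r xs id \<sigma>0 v)"
      using perm_cols[of \<tau>0 r xs \<sigma>0] adm0 unfolding adm_def by blast
    have "qdvd Q (\<lambda>v. Determinant.det (gmat r xs id \<sigma>0 v))"
      using allq adm0 \<open>\<rho> = r\<close> unfolding adm_def Q_def by blast
    then have "qdvd Q (\<lambda>v. c * Determinant.det (gmat r xs id \<sigma>0 v))"
      by (rule qdvd_mult_left) simp
    then show False using nq0 c \<open>\<rho> = r\<close> by simp
  qed
  with \<rho>r have \<rho>lt: "\<rho> < r" by simp
  have allq1: "qdvd Q (\<lambda>v. Determinant.det (gmat (Suc \<rho>) xs \<tau> \<sigma> v))" if "adm (Suc \<rho>) \<tau> \<sigma>" for \<tau> \<sigma>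
  proof (rule ccontr)
    assume "\<not> ?thesis"
    then have "Suc \<rho> \<in> S" unfolding S_def using that \<rho>lt by auto
    then have "Suc \<rho> \<le> \<rho>" unfolding \<rho>_def using finS by (simp add: Max_ge)
    then show False by simp
  qed
  have "\<not> {..<r} \<subseteq> \<tau>0 ` {..<\<rho>}"
  proof
    assume "{..<r} \<subseteq> \<tau>0 ` {..<\<rho>}"
    then have "card {..<r} \<le> card (\<tau>0 ` {..<\<rho>})" by (intro card_mono) auto
    also have "\<dots> \<le> \<rho>" using card_image_le[of "{..<\<rho>}" \<tau>0] by simp
    finally show False using \<rho>lt by simp
  qed
  then obtain j where j: "j < r" "j \<notin> \<tau>0 ` {..<\<rho>}" by blast
  define \<tau>1 where "\<tau>1 = \<tau>0(\<rho> := j)"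
  have \<tau>1k: "\<And>k. k < \<rho> \<Longrightarrow> \<tau>1 k = \<tau>0 k" unfolding \<tau>1_def by simp
  have \<tau>1\<rho>: "\<tau>1 \<rho> = j" unfolding \<tau>1_def by simp
  have \<tau>1r: "\<And>k. k < Suc \<rho> \<Longrightarrow> \<tau>1 k < r"
    using adm0 j unfolding adm_def \<tau>1_def by (auto simp: less_Suc_eq)
  have adm1: "adm (Suc \<rho>) \<tau>1 (\<sigma>0(\<rho> := b))" if "b \<in> Basis" "b \<notin> \<sigma>0 ` {..<\<rho>}" for b
    using adm0 j that unfolding adm_def \<tau>1_def
    by (auto simp: lessThan_Suc inj_on_def image_subset_iff)
  define coef where "coef = (\<lambda>k v. Determinant.cofactor (gmat (Suc \<rho>) xs \<tau>1 \<sigma>0 v) k \<rho>)"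
  have coefp: "poly_fun (coef k)" for k
    unfolding coef_def gmat_def
    by (rule cofactor_poly) (use \<tau>1r xpm poly_map_inner in blast)
  define a where "a = coef \<rho>"
  have a_eq: "a v = Determinant.det (gmat \<rho> xs \<tau>0 \<sigma>0 v)" for v
    unfolding a_def coef_def by (rule cofactor_last[OF \<tau>1k])
  have nqa: "\<not> qdvd Q a" using nq0 a_eq by (metis ext)
  define z where "z = (\<lambda>v. \<Sum>k<Suc \<rho>. coef k v *\<^sub>R xs (\<tau>1 k) v)"
  have zD: "z \<in> D" unfolding z_def
    by (rule submodule_sum[OF D]) (use coefp xs \<tau>1r in auto)
  have z_inner: "z v \<bullet> w = (\<Sum>k<Suc \<rho>. coef k v * (xs (\<tau>1 k) v \<bullet> w))" for v w
    unfolding z_def by (simp only: inner_sum_left inner_scaleR_left)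
  have zq: "qdvd Q (\<lambda>v. z v \<bullet> b)" if b: "b \<in> Basis" for b
  proof -
    have eq: "z v \<bullet> b = Determinant.det (gmat (Suc \<rho>) xs \<tau>1 (\<sigma>0(\<rho> := b)) v)" for v
      unfolding z_inner col_expand coef_def by (simp add: mult.commute)
    show ?thesis
    proof (cases "b \<in> \<sigma>0 ` {..<\<rho>}")
      case True
      then obtain i0 where i0: "i0 < \<rho>" "b = \<sigma>0 i0" by auto
      have "z v \<bullet> b = 0" for v using identical_cols_zero[OF i0(1), of xs \<tau>1 \<sigma>0 v] eq[of v] i0(2) by simp
      then show ?thesis using qdvd_zero by simp
    next
      case False
      then show ?thesis unfolding eq using allq1[OF adm1[OF b False]] by simp
    qed
  qed
  have "\<forall>b\<in>Basis. \<exists>h. poly_fun h \<and> (\<forall>v. z v \<bullet> b = Q v * h v)" using zq unfolding qdvd_def by blast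
  then obtain yb where yb: "\<And>b. b \<in> Basis \<Longrightarrow> poly_fun (yb b) \<and> (\<forall>v. z v \<bullet> b = Q v * yb b v)"
    by metis
  define y where "y = (\<lambda>v. \<Sum>b\<in>Basis. yb b v *\<^sub>R b)"
  have y_inner: "y v \<bullet> b = yb b v" if "b \<in> Basis" for v b
    unfolding y_def using that by (simp add: inner_sum_left inner_Basis if_distrib cong: if_cong)
  have ypm: "poly_map y" unfolding poly_map_def using y_inner yb by simp
  have Qy: "(\<lambda>v. Q v *\<^sub>R y v) = z"
  proof
    fix v show "Q v *\<^sub>R y v = z v"
    proof (rule euclidean_eqI)
      fix b :: 'w assume "b \<in> Basis"
      then show "(Q v *\<^sub>R y v) \<bullet> b = z v \<bullet> b" using y_inner yb by simp
    qed
  qed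
  have yD: "y \<in> D" using sat ypm zD Qy unfolding Q_def by auto
  have key: "Q v * Determinant.det (gmat r (xs(j := y)) id \<sigma> v) = a v * Determinant.det (gmat r xs id \<sigma> v)" for \<sigma> v
  proof -
    define cof where "cof = (\<lambda>i. Determinant.cofactor (gmat r xs id \<sigma> v) j i)"
    have "Q v * Determinant.det (gmat r (xs(j := y)) id \<sigma> v) = Q v * (\<Sum>i<r. (y v \<bullet> \<sigma> i) * cof i)"
      unfolding row_replace[OF j(1)] cof_def ..
    also have "\<dots> = (\<Sum>i<r. (z v \<bullet> \<sigma> i) * cof i)"
    proof -
      have "z v \<bullet> w = Q v * (y v \<bullet> w)" for w using Qy[symmetric] by simp
      then show ?thesis by (simp add: sum_distrib_left mult.assoc)
    qed
    also have "\<dots> = (\<Sum>i<r. \<Sum>k<Suc \<rho>. coef k v * ((xs (\<tau>1 k) v \<bullet> \<sigma> i) * cof i))"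
      unfolding z_inner sum_distrib_right by (simp only: mult.assoc)
    also have "\<dots> = (\<Sum>k<Suc \<rho>. coef k v * (\<Sum>i<r. (xs (\<tau>1 k) v \<bullet> \<sigma> i) * cof i))"
      by (subst sum.swap) (simp add: sum_distrib_left)
    also have "\<dots> = (\<Sum>k<Suc \<rho>. coef k v * Determinant.det (gmat r (xs(j := xs (\<tau>1 k))) id \<sigma> v))"
      unfolding row_replace[OF j(1)] cof_def ..
    also have "\<dots> = coef \<rho> v * Determinant.det (gmat r (xs(j := xs (\<tau>1 \<rho>))) id \<sigma> v)
        + (\<Sum>k<\<rho>. coef k v * Determinant.det (gmat r (xs(j := xs (\<tau>1 k))) id \<sigma> v))"
      by simp
    also have "(\<Sum>k<\<rho>. coef k v * Determinant.det (gmat r (xs(j := xs (\<tau>1 k))) id \<sigma> v)) = 0"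
    proof (intro sum.neutral ballI)
      fix k assume "k \<in> {..<\<rho>}"
      then have k: "k < \<rho>" by simp
      have "\<tau>1 k < r" using \<tau>1r k by simp
      moreover have "\<tau>1 k \<noteq> j" using j(2) k \<tau>1k[OF k] by auto
      ultimately show "coef k v * Determinant.det (gmat r (xs(j := xs (\<tau>1 k))) id \<sigma> v) = 0"
        using identical_rows_zero[OF j(1), of "\<tau>1 k" xs \<sigma> v] by simp
    qed
    finally have "Q v * Determinant.det (gmat r (xs(j := y)) id \<sigma> v) =
       coef \<rho> v * Determinant.det (gmat r (xs(j := xs (\<tau>1 \<rho>))) id \<sigma> v) + 0" .
    then show ?thesis unfolding \<tau>1\<rho> fun_upd_triv a_def by (simp only: add_0_right)
  qed
  show ?thesis
    apply (rule exI[of _ j], rule conjI[OF j(1)], rule bexI[OF _ yD], rule exI[of _ a])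
    using coefp nqa key unfolding a_def Q_def by blast
qed



theorem lemma3p6:
  fixes B :: "'v::euclidean_space \<Rightarrow> 'v \<Rightarrow> real"
    and p q r :: nat
    and D :: "('v \<Rightarrow> 'w::euclidean_space) set"
  assumes sig: "has_signature B p q"
    and pq: "p \<ge> 1" "q \<ge> 1" "p + q \<ge> 3"
    and r: "r \<le> DIM('w)"
    and D: "poly_submodule D"
    and sat: "\<forall>x. poly_map x \<longrightarrow> (\<lambda>v. B v v *\<^sub>R x v) \<in> D \<longrightarrow> x \<in> D"
    and ex: "\<exists>xs. (\<forall>i<r. xs i \<in> D) \<and> minor_ideal r xs \<noteq> {\<lambda>v. 0}"
  shows "\<exists>xs. (\<forall>i<r. xs i \<in> D) \<and>
           \<not> (minor_ideal r xs \<subseteq> {(\<lambda>v. B v v * f v) | f. poly_fun f})"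
proof -
  define Q where "Q = (\<lambda>v. B v v)"
  have bil: "bilinear B" and sym: "\<And>u v. B u v = B v u" using sig unfolding has_signature_def by auto
  obtain e :: "nat \<Rightarrow> 'v" where
    eo: "\<forall>i<p+q. \<forall>j<p+q. i \<noteq> j \<longrightarrow> B (e i) (e j) = 0" and
    ep: "\<forall>i<p. B (e i) (e i) = 1" and en: "\<forall>i. p \<le> i \<and> i < p+q \<longrightarrow> B (e i) (e i) = -1"
    using sig unfolding has_signature_def by blast
  have ee0: "B (e 0) (e 0) = 1" using ep pq(1) by simp
  have prime: "qdvd Q f \<or> qdvd Q g" if f: "poly_fun f" and g: "poly_fun g" and fg: "qdvd Q (\<lambda>v. f v * g v)" for f g
  proof (cases "p \<ge> 2")
    case True
    have "B (e 1) (e 0) = 0" using eo True by simp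
    moreover have "B (e 1) (e 1) > 0" using ep True by simp
    ultimately show ?thesis using Q_prime[OF bil sym ee0 _ _ f g, of "e 1"] fg unfolding Q_def by blast
  next
    case False
    then have p1: "p = 1" using pq by simp
    have bil': "bilinear (\<lambda>u v. - B u v)" by (rule bilinear_neg[OF bil])
    have sym': "\<And>u v. - B u v = - B v u" using sym by simp
    have e1: "- B (e 1) (e 1) = 1" using en[rule_format, of 1] p1 pq by simp
    have "- B (e 2) (e 1) = 0" using eo[rule_format, of 2 1] p1 pq by simp
    moreover have "- B (e 2) (e 2) > 0" using en[rule_format, of 2] p1 pq by simp
    moreover have "qdvd (\<lambda>v. - B v v) (\<lambda>v. f v * g v)" using fg qdvd_neg[of "\<lambda>v. B v v"] unfolding Q_def by simp
    ultimately have "qdvd (\<lambda>v. - B v v) f \<or> qdvd (\<lambda>v. - B v v) g"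
      using Q_prime[OF bil' sym' e1 _ _ f g, of "e 2"] by blast
    then show ?thesis using qdvd_neg[of "\<lambda>v. B v v"] unfolding Q_def by simp
  qed
  define adm where "adm = (\<lambda>\<sigma>::nat \<Rightarrow> 'w. inj_on \<sigma> {..<r} \<and> \<sigma> ` {..<r} \<subseteq> Basis)"
  define G where "G = (\<exists>xs. (\<forall>i<r. xs i \<in> D) \<and>
           \<not> (minor_ideal r xs \<subseteq> {(\<lambda>v. B v v * f v) | f. poly_fun f}))"
  have Dpm: "\<And>x. x \<in> D \<Longrightarrow> poly_map x" using D unfolding poly_submodule_def by blast
  have minor_in: "(\<lambda>v. Determinant.det (gmat r xs id \<sigma> v)) \<in> minor_ideal r xs" if "adm \<sigma>" for xs \<sigma>
  proof -
    have m: "(\<lambda>v. det_nat r (\<lambda>i j. xs j v \<bullet> \<sigma> i)) \<in> minors r xs"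
      using that unfolding minors_def adm_def by blast
    let ?M = "(\<lambda>v. det_nat r (\<lambda>i j. xs j v \<bullet> \<sigma> i))"
    have "\<exists>n f g. ?M = (\<lambda>v. \<Sum>i<(n::nat). f i v * g i v) \<and> (\<forall>i<n. poly_fun (f i) \<and> g i \<in> minors r xs)"
      by (rule exI[of _ 1], rule exI[of _ "\<lambda>i v. 1"], rule exI[of _ "\<lambda>i. ?M"]) (use m in auto)
    then have "?M \<in> minor_ideal r xs" unfolding minor_ideal_def ideal_gen_def by blast
    then show ?thesis by (simp add: det_nat_eq)
  qed
  have finG: "G" if xs: "\<forall>i<r. xs i \<in> D" and "adm \<sigma>" and nq: "\<not> qdvd Q (\<lambda>v. Determinant.det (gmat r xs id \<sigma> v))" for xs \<sigma>
  proof -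
    have "\<not> (minor_ideal r xs \<subseteq> {(\<lambda>v. B v v * f v) | f. poly_fun f})"
    proof
      assume "minor_ideal r xs \<subseteq> {(\<lambda>v. B v v * f v) | f. poly_fun f}"
      then obtain f where "poly_fun f" "(\<lambda>v. Determinant.det (gmat r xs id \<sigma> v)) = (\<lambda>v. B v v * f v)"
        using minor_in[OF \<open>adm \<sigma>\<close>] by blast
      then have "qdvd Q (\<lambda>v. Determinant.det (gmat r xs id \<sigma> v))" unfolding qdvd_def Q_def
        by (intro exI[of _ f]) (simp add: fun_eq_iff)
      with nq show False by blast
    qed
    then show G unfolding G_def using xs by blast
  qed
  have ind: "\<forall>xs \<sigma> h. (\<forall>i<r. xs i \<in> D) \<longrightarrow> adm \<sigma> \<longrightarrow> poly_fun h \<longrightarrow> \<not> qdvd Q h \<longrightarrow>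
      (\<forall>v. Determinant.det (gmat r xs id \<sigma> v) = Q v ^ k * h v) \<longrightarrow> G" for k
  proof (induction k)
    case 0
    show ?case
    proof (intro allI impI)
      fix xs \<sigma> h assume H: "\<forall>i<r. xs i \<in> D" "adm \<sigma>" "poly_fun h" "\<not> qdvd Q h"
        "\<forall>v. Determinant.det (gmat r xs id \<sigma> v) = Q v ^ 0 * h v"
      then have "(\<lambda>v. Determinant.det (gmat r xs id \<sigma> v)) = h" by auto
      then show G using finG[OF H(1,2)] H(4) by simp
    qed
  next
    case (Suc k)
    show ?case
    proof (intro allI impI)
      fix xs \<sigma> h assume H: "\<forall>i<r. xs i \<in> D" "adm \<sigma>" "poly_fun h" "\<not> qdvd Q h"
        "\<forall>v. Determinant.det (gmat r xs id \<sigma> v) = Q v ^ Suc k * h v"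
      show G
      proof (cases "\<exists>\<sigma>'. adm \<sigma>' \<and> \<not> qdvd Q (\<lambda>v. Determinant.det (gmat r xs id \<sigma>' v))")
        case True
        then show G using finG[OF H(1)] by blast
      next
        case False
        then have allq: "\<forall>\<sigma>. inj_on \<sigma> {..<r} \<and> \<sigma> ` {..<r} \<subseteq> Basis \<longrightarrow>
                  qdvd (\<lambda>v. B v v) (\<lambda>v. Determinant.det (gmat r xs id \<sigma> v))"
          unfolding adm_def Q_def by blast
        obtain j y a where j: "j < r" and yD: "y \<in> D" and ap: "poly_fun a" and nqa: "\<not> qdvd (\<lambda>v. B v v) a"
          and key: "\<forall>\<sigma> v. B v v * Determinant.det (gmat r (xs(j := y)) id \<sigma> v) = a v * Determinant.det (gmat r xs id \<sigma> v)"
          using step[OF bil D sat H(1) allq] by blast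
        define xs' where "xs' = xs(j := y)"
        have xs': "\<forall>i<r. xs' i \<in> D" using H(1) yD unfolding xs'_def by simp
        have h'p: "poly_fun (\<lambda>v. a v * h v)" using ap H(3) by (rule poly_fun_mult)
        have nqh': "\<not> qdvd Q (\<lambda>v. a v * h v)" using prime[OF ap H(3)] nqa H(4) unfolding Q_def by blast
        have Mp: "poly_fun (\<lambda>v. Determinant.det (gmat r xs' id \<sigma> v))"
          using xs' Dpm \<open>adm \<sigma>\<close> unfolding adm_def by (intro gdet_poly) auto
        have Yp: "poly_fun (\<lambda>v. Q v ^ k * (a v * h v))"
          unfolding Q_def by (intro poly_fun_mult poly_fun_power Q_poly[OF bil] h'p)
        have "Determinant.det (gmat r xs' id \<sigma> y') = Q y' ^ k * (a y' * h y')" for y'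
        proof (rule Q_cancel[OF bil sym ee0 Mp Yp])
          fix v
          have "B v v * Determinant.det (gmat r xs' id \<sigma> v) = a v * (Q v ^ Suc k * h v)"
            using key H(5) unfolding xs'_def by simp
          then show "B v v * Determinant.det (gmat r xs' id \<sigma> v) = B v v * (Q v ^ k * (a v * h v))"
            unfolding Q_def by (simp add: algebra_simps)
        qed
        then have eqk: "\<forall>v. Determinant.det (gmat r xs' id \<sigma> v) = Q v ^ k * (a v * h v)" by blast
        show G by (rule Suc.IH[rule_format, OF xs'[rule_format] \<open>adm \<sigma>\<close> h'p nqh' eqk[rule_format]])
      qed
    qed
  qed
  obtain xs0 where xs0: "\<forall>i<r. xs0 i \<in> D" and ne: "minor_ideal r xs0 \<noteq> {\<lambda>v. 0}" using ex by blast
  have "\<exists>\<sigma> v. adm \<sigma> \<and> Determinant.det (gmat r xs0 id \<sigma> v) \<noteq> 0"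
  proof (rule ccontr)
    assume "\<not> ?thesis"
    then have zero: "\<And>m. m \<in> minors r xs0 \<Longrightarrow> m = (\<lambda>v. 0)"
    proof -
      fix m assume "m \<in> minors r xs0"
      then obtain \<sigma> where "adm \<sigma>" "m = (\<lambda>v. det_nat r (\<lambda>i j. xs0 j v \<bullet> \<sigma> i))"
        unfolding minors_def adm_def by blast
      then show "m = (\<lambda>v. 0)" using \<open>\<not> (\<exists>\<sigma> v. adm \<sigma> \<and> Determinant.det (gmat r xs0 id \<sigma> v) \<noteq> 0)\<close>
        by (simp add: det_nat_eq fun_eq_iff)
    qed
    have "minor_ideal r xs0 \<subseteq> {\<lambda>v. 0}"
    proof
      fix m assume "m \<in> minor_ideal r xs0"
      then obtain n :: nat and f g where m: "m = (\<lambda>v. \<Sum>i<n. f i v * g i v)" and g: "\<forall>i<n. g i \<in> minors r xs0"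
        unfolding minor_ideal_def ideal_gen_def by blast
      have "g i v = 0" if "i < n" for i v using zero[of "g i"] g that by simp
      then show "m \<in> {\<lambda>v. 0}" unfolding m by simp
    qed
    moreover have "(\<lambda>v. 0) \<in> minor_ideal r xs0"
      unfolding minor_ideal_def ideal_gen_def by (rule CollectI, rule exI[of _ 0]) simp
    ultimately show False using ne by blast
  qed
  then obtain \<sigma>0 v0 where adm0: "adm \<sigma>0" and nz: "Determinant.det (gmat r xs0 id \<sigma>0 v0) \<noteq> 0" by blast
  have Mp: "poly_fun (\<lambda>v. Determinant.det (gmat r xs0 id \<sigma>0 v))"
    using xs0 Dpm adm0 unfolding adm_def by (intro gdet_poly) auto
  obtain k h where "poly_fun h" "\<not> qdvd (\<lambda>v. B v v) h" "\<forall>v. Determinant.det (gmat r xs0 id \<sigma>0 v) = (B v v)^k * h v"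
    using pow_bound[OF bil sym ee0 Mp nz] by blast
  then have G using ind[of k] xs0 adm0 unfolding Q_def by blast
  then show ?thesis unfolding G_def .
qed


end
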